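(* Let $T>0$, $d\ge1$, and let $L:[0,T]\times\mathbb{R}^d\to\mathbb{R}^d$ satisfy: $|L(t,x)|\le h_1(t)$ for all $(t,x)\in(0,T)\times\mathbb{R}^d$, and $|L(t,x)-L(t,y)|\le h_2(t)|x-y|$ for all $(t,x,y)\in(0,T)\times\mathbb{R}^d\times\mathbb{R}^d$, where $h_1,h_2:(0,T)\to\mathbb{R}^+$ are such that there exists $D_T>0$ with $\int_0^th_i(s)ds\le D_T$ for all $t\le T$, $i=1,2$. On a filtered probability space $(\Omega,\mathcal F,\mathbb P,(\mathcal F_t))$ with a $d$-dimensional Brownian motion $W$ and an $\mathcal F_0$-measurable random variable $X_0\sim q_0$, the equation $$dX_t=dW_t+\Big\{\int_0^t\int_{\mathbb{R}^d}L(t-s,X_t-y)\,\mathbb Q_s(dy)\,ds\Big\}dt,\quad t\le T,\qquad \mathbb Q_s=\mathcal L(X_s),$$ admits a unique strong solution. *)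

theory Defs
  imports "HOL-Probability.Probability"
begin

definition gauss_law :: "real \<Rightarrow> (real ^ 'd) measure" where
  "gauss_law v = density lborel (\<lambda>x. ennreal (\<Prod>i\<in>UNIV. normal_density 0 (sqrt v) (x $ i)))"

definition filtered_space :: "'a measure \<Rightarrow> (real \<Rightarrow> 'a measure) \<Rightarrow> bool" where
  "filtered_space M F \<longleftrightarrow> prob_space M \<and> filtration (space M) F \<and> (\<forall>t. sets (F t) \<subseteq> sets M)"

definition brownian_motion ::
  "'a measure \<Rightarrow> (real \<Rightarrow> 'a measure) \<Rightarrow> real \<Rightarrow> (real \<Rightarrow> 'a \<Rightarrow> real ^ 'd) \<Rightarrow> bool" where
  "brownian_motion M F T W \<longleftrightarrow>
     (\<forall>\<omega>\<in>space M. W 0 \<omega> = 0) \<and>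
     (\<forall>\<omega>\<in>space M. continuous_on {0..T} (\<lambda>t. W t \<omega>)) \<and>
     (\<forall>t\<in>{0..T}. W t \<in> borel_measurable (F t)) \<and>
     (\<forall>s t. 0 \<le> s \<longrightarrow> s < t \<longrightarrow> t \<le> T \<longrightarrow>
        distr M borel (\<lambda>\<omega>. W t \<omega> - W s \<omega>) = gauss_law (t - s) \<and>
        (\<forall>A\<in>sets (F s). \<forall>B\<in>sets borel.
           measure M (A \<inter> ((\<lambda>\<omega>. W t \<omega> - W s \<omega>) -` B \<inter> space M)) =
           measure M A * measure M ((\<lambda>\<omega>. W t \<omega> - W s \<omega>) -` B \<inter> space M)))"

definition mv_drift ::
  "'a measure \<Rightarrow> (real \<Rightarrow> real ^ 'd \<Rightarrow> real ^ 'd) \<Rightarrow> (real \<Rightarrow> 'a \<Rightarrow> real ^ 'd) \<Rightarrow> real \<Rightarrow> 'a \<Rightarrow> real ^ 'd" where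
  "mv_drift M L X t \<omega> =
     (\<integral>s\<in>{0..t}. (\<integral>y. L (t - s) (X t \<omega> - y) \<partial>(distr M borel (X s))) \<partial>lborel)"

definition mv_solution ::
  "'a measure \<Rightarrow> (real \<Rightarrow> 'a measure) \<Rightarrow> real \<Rightarrow> (real \<Rightarrow> 'a \<Rightarrow> real ^ 'd) \<Rightarrow> ('a \<Rightarrow> real ^ 'd)
     \<Rightarrow> (real \<Rightarrow> real ^ 'd \<Rightarrow> real ^ 'd) \<Rightarrow> (real \<Rightarrow> 'a \<Rightarrow> real ^ 'd) \<Rightarrow> bool" where
  "mv_solution M F T W X0 L X \<longleftrightarrow>
     (\<forall>t\<in>{0..T}. X t \<in> borel_measurable (F t)) \<and>
     (\<forall>\<omega>\<in>space M. continuous_on {0..T} (\<lambda>t. X t \<omega>)) \<and>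
     (AE \<omega> in M. \<forall>t\<in>{0..T}.
        X t \<omega> = X0 \<omega> + W t \<omega> + (\<integral>r\<in>{0..t}. mv_drift M L X r \<omega> \<partial>lborel))"

end

theory Submission
  imports Defs
begin
definition cl :: "real \<Rightarrow> real \<Rightarrow> real" where "cl t s = max 0 (min t s)"

lemma ceil_approx:
  fixes x :: real assumes "x \<ge> 0"
  shows "(\<lambda>k. real (nat \<lceil>real (Suc k) * x\<rceil>) / real (Suc k)) \<longlonglongrightarrow> x"
proof (rule real_tendsto_sandwich[where f="\<lambda>k. x" and h="\<lambda>k. x + 1 / real (Suc k)"])
  have e: "real (nat \<lceil>real (Suc k) * x\<rceil>) = of_int \<lceil>real (Suc k) * x\<rceil>" for k
    using assms by simp
  show "\<forall>\<^sub>F n in sequentially. x \<le> real (nat \<lceil>real (Suc n) * x\<rceil>) / real (Suc n)"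
  proof (intro always_eventually allI)
    fix n
    have "real (Suc n) * x \<le> of_int \<lceil>real (Suc n) * x\<rceil>" by (rule le_of_int_ceiling)
    then show "x \<le> real (nat \<lceil>real (Suc n) * x\<rceil>) / real (Suc n)"
      unfolding e by (simp add: field_simps)
  qed
  show "\<forall>\<^sub>F n in sequentially. real (nat \<lceil>real (Suc n) * x\<rceil>) / real (Suc n) \<le> x + 1 / real (Suc n)"
  proof (intro always_eventually allI)
    fix n
    have "of_int \<lceil>real (Suc n) * x\<rceil> \<le> real (Suc n) * x + 1"
      using ceiling_correct[of "real (Suc n) * x"] by linarith
    then have "of_int \<lceil>real (Suc n) * x\<rceil> / real (Suc n) \<le> (real (Suc n) * x + 1) / real (Suc n)"
      by (rule divide_right_mono) auto
    also have "(real (Suc n) * x + 1) / real (Suc n) = x + 1 / real (Suc n)"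
      by (simp add: field_simps)
    finally show "real (nat \<lceil>real (Suc n) * x\<rceil>) / real (Suc n) \<le> x + 1 / real (Suc n)"
      unfolding e .
  qed
  show "(\<lambda>n. x) \<longlonglongrightarrow> x" by simp
  show "(\<lambda>n. x + 1 / real (Suc n)) \<longlonglongrightarrow> x"
    using tendsto_add[OF tendsto_const[of x] LIMSEQ_Suc[OF lim_inverse_n']] by simp
qed

lemma prog_meas:
  fixes Z :: "real \<Rightarrow> 'a \<Rightarrow> 'b::metric_space"
  assumes t: "t \<ge> 0"
    and meas: "\<And>u. u \<in> {0..t} \<Longrightarrow> Z u \<in> borel_measurable N"
    and cont: "\<And>\<omega>. \<omega> \<in> space N \<Longrightarrow> continuous_on {0..t} (\<lambda>u. Z u \<omega>)"
  shows "(\<lambda>(\<omega>, s). Z (cl t s) \<omega>) \<in> borel_measurable (N \<Otimes>\<^sub>M borel)"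
proof (rule borel_measurable_LIMSEQ_metric)
  let ?q = "\<lambda>k (s::real). min t (real (nat \<lceil>real (Suc k) * max 0 s\<rceil>) / real (Suc k))"
  fix k
  have g: "(\<lambda>x::'a \<times> real. nat \<lceil>real (Suc k) * max 0 (snd x)\<rceil>) \<in> measurable (N \<Otimes>\<^sub>M borel) (count_space UNIV)"
    by measurable
  have f: "(\<lambda>x::'a \<times> real. Z (min t (real j / real (Suc k))) (fst x)) \<in> borel_measurable (N \<Otimes>\<^sub>M borel)" for j
  proof -
    have "Z (min t (real j / real (Suc k))) \<in> borel_measurable N" using t by (intro meas) auto
    then show ?thesis by measurable
  qed
  show "(\<lambda>x. case x of (\<omega>, s) \<Rightarrow> Z (?q k s) \<omega>) \<in> borel_measurable (N \<Otimes>\<^sub>M borel)"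
    unfolding case_prod_beta by (rule measurable_compose_countable[OF f g])
next
  fix x assume x: "x \<in> space (N \<Otimes>\<^sub>M (borel::real measure))"
  obtain \<omega> s where xe: "x = (\<omega>, s)" by (cases x)
  have om: "\<omega> \<in> space N" using x xe by (simp add: space_pair_measure)
  have "(\<lambda>k. min t (real (nat \<lceil>real (Suc k) * max 0 s\<rceil>) / real (Suc k))) \<longlonglongrightarrow> min t (max 0 s)"
    by (intro tendsto_min tendsto_const ceil_approx) simp
  moreover have "min t (max 0 s) = cl t s" using t by (simp add: cl_def)
  ultimately have lim: "(\<lambda>k. min t (real (nat \<lceil>real (Suc k) * max 0 s\<rceil>) / real (Suc k))) \<longlonglongrightarrow> cl t s" by simp
  have inn: "min t (real (nat \<lceil>real (Suc k) * max 0 s\<rceil>) / real (Suc k)) \<in> {0..t}" for k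
  proof -
    have a: "0 \<le> real (nat \<lceil>real (Suc k) * max 0 s\<rceil>) / real (Suc k)"
      by (intro divide_nonneg_nonneg of_nat_0_le_iff)
    show ?thesis using t a by (auto simp only: atLeastAtMost_iff min.bounded_iff min.cobounded1)
  qed
  have clin: "cl t s \<in> {0..t}" using t by (auto simp: cl_def)
  have "(\<lambda>k. Z (min t (real (nat \<lceil>real (Suc k) * max 0 s\<rceil>) / real (Suc k))) \<omega>) \<longlonglongrightarrow> Z (cl t s) \<omega>"
    by (rule continuous_on_tendsto_compose[OF cont[OF om] lim clin]) (rule always_eventually, intro allI inn)
  then show "(\<lambda>k. case x of (\<omega>, s) \<Rightarrow> Z (min t (real (nat \<lceil>real (Suc k) * max 0 s\<rceil>) / real (Suc k))) \<omega>) \<longlonglongrightarrow> (case x of (\<omega>, s) \<Rightarrow> Z (cl t s) \<omega>)"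
    using xe by simp
qed

locale mv =
  fixes T D :: real
    and L :: "real \<Rightarrow> real ^ 'd \<Rightarrow> real ^ 'd"
    and h1 h2 :: "real \<Rightarrow> real"
    and M :: "'a measure" and F :: "real \<Rightarrow> 'a measure"
    and W :: "real \<Rightarrow> 'a \<Rightarrow> real ^ 'd" and X0 :: "'a \<Rightarrow> real ^ 'd"
  assumes T_pos: "T > 0"
    and L_meas: "(\<lambda>(t, x). L t x) \<in> borel_measurable (restrict_space borel ({0..T} \<times> UNIV))"
    and h1_bound: "\<And>t x. t \<in> {0<..<T} \<Longrightarrow> norm (L t x) \<le> h1 t"
    and h2_bound: "\<And>t x y. t \<in> {0<..<T} \<Longrightarrow> norm (L t x - L t y) \<le> h2 t * norm (x - y)"
    and h1_nn: "\<And>t. t \<in> {0<..<T} \<Longrightarrow> h1 t \<ge> 0"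
    and h2_nn: "\<And>t. t \<in> {0<..<T} \<Longrightarrow> h2 t \<ge> 0"
    and D_pos: "D > 0"
    and h1_int: "\<And>t. t \<le> T \<Longrightarrow> (\<integral>\<^sup>+ s\<in>{0<..<t}. ennreal (h1 s) \<partial>lborel) \<le> ennreal D"
    and h2_int: "\<And>t. t \<le> T \<Longrightarrow> (\<integral>\<^sup>+ s\<in>{0<..<t}. ennreal (h2 s) \<partial>lborel) \<le> ennreal D"
    and filt: "filtered_space M F"
    and bm: "brownian_motion M F T W"
    and X0_meas: "X0 \<in> borel_measurable (F 0)"
begin

definition Lc where "Lc t x = (if t \<in> {0..T} then L t x else 0)"

definition good :: "(real \<Rightarrow> 'a \<Rightarrow> real ^ 'd) \<Rightarrow> bool" where
  "good Z \<longleftrightarrow> (\<forall>t\<in>{0..T}. Z t \<in> borel_measurable (F t)) \<and> (\<forall>\<omega>\<in>space M. continuous_on {0..T} (\<lambda>t. Z t \<omega>))"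

definition EZ where "EZ Z r s x = (\<integral>\<omega>. Lc (r - s) (x - Z (cl T s) \<omega>) \<partial>M)"

definition DZ where "DZ Z r x = (\<integral>s. indicator {0..r} s *\<^sub>R EZ Z r s x \<partial>lborel)"

lemma prob: "prob_space M" using filt by (simp add: filtered_space_def)

lemma filtr: "filtration (space M) F" using filt by (simp add: filtered_space_def)

lemma space_F: "space (F t) = space M" using filtr by (simp add: filtration_def)

lemma sets_F: "sets (F t) \<subseteq> sets M" using filt by (simp add: filtered_space_def)

lemma sets_F_mono: "s \<le> t \<Longrightarrow> sets (F s) \<subseteq> sets (F t)" using filtr by (simp add: filtration_def)

lemma meas_F_M: "f \<in> measurable (F t) N \<Longrightarrow> f \<in> measurable M N"
  by (rule measurable_from_subalg[of M "F t"]) (auto simp: subalgebra_def space_F sets_F)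

lemma meas_F_mono: "s \<le> t \<Longrightarrow> f \<in> measurable (F s) N \<Longrightarrow> f \<in> measurable (F t) N"
  by (rule measurable_from_subalg[of "F t" "F s"]) (auto simp: subalgebra_def space_F sets_F_mono)

lemma Lc_meas: "(\<lambda>p. Lc (fst p) (snd p)) \<in> borel_measurable (borel \<Otimes>\<^sub>M borel)"
proof -
  have s: "{0..T} \<times> UNIV \<inter> space borel \<in> sets (borel :: (real \<times> (real^'d)) measure)"
    by (intro sets.Int borel_closed closed_Times) auto
  have "(\<lambda>x. indicator ({0..T} \<times> UNIV) x *\<^sub>R (case x of (t, x) \<Rightarrow> L t x)) \<in> borel_measurable (borel :: (real \<times> (real^'d)) measure)"
    using borel_measurable_restrict_space_iff[OF s] L_meas by blast
  moreover have "(\<lambda>x. indicator ({0..T} \<times> UNIV) x *\<^sub>R (case x of (t, x) \<Rightarrow> L t x)) = (\<lambda>p. Lc (fst p) (snd p))"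
    by (auto simp: fun_eq_iff Lc_def indicator_def)
  ultimately show ?thesis by (simp add: borel_prod)
qed

lemma Lc_meas'[measurable (raw)]:
  "f \<in> borel_measurable N \<Longrightarrow> g \<in> borel_measurable N \<Longrightarrow> (\<lambda>x. Lc (f x) (g x)) \<in> borel_measurable N"
  using measurable_compose[OF measurable_Pair Lc_meas, of f N g] by simp

lemma good_M: "good Z \<Longrightarrow> t \<in> {0..T} \<Longrightarrow> Z t \<in> borel_measurable M"
  unfolding good_def using meas_F_M by blast

lemma good_prog: "good Z \<Longrightarrow> t \<in> {0..T} \<Longrightarrow> (\<lambda>(\<omega>, s). Z (cl t s) \<omega>) \<in> borel_measurable (F t \<Otimes>\<^sub>M borel)"
  unfolding good_def
  by (intro prog_meas) (auto simp: space_F intro: meas_F_mono elim!: continuous_on_subset)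

lemma good_jointM: "good Z \<Longrightarrow> (\<lambda>(\<omega>, s). Z (cl T s) \<omega>) \<in> borel_measurable (M \<Otimes>\<^sub>M borel)"
  using T_pos unfolding good_def
  by (intro prog_meas) (auto intro: meas_F_M elim!: continuous_on_subset)

lemma EZ_meas:
  assumes Z: "good Z"
  shows "(\<lambda>y. EZ Z (fst (fst y)) (snd (fst y)) (snd y)) \<in> borel_measurable ((borel \<Otimes>\<^sub>M borel) \<Otimes>\<^sub>M borel)"
proof -
  interpret prob_space M by (rule prob)
  let ?N = "((borel::real measure) \<Otimes>\<^sub>M (borel::real measure)) \<Otimes>\<^sub>M (borel :: (real^'d) measure)"
  have "(\<lambda>q. (\<lambda>(\<omega>, s). Z (cl T s) \<omega>) (snd q, snd (fst (fst q)))) \<in> borel_measurable (?N \<Otimes>\<^sub>M M)"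
    by (rule measurable_compose[OF _ good_jointM[OF Z]]) measurable
  then have A[measurable]: "(\<lambda>q. Z (cl T (snd (fst (fst q)))) (snd q)) \<in> borel_measurable (?N \<Otimes>\<^sub>M M)"
    by simp
  have "case_prod (\<lambda>y \<omega>. Lc (fst (fst y) - snd (fst y)) (snd y - Z (cl T (snd (fst y))) \<omega>)) \<in> borel_measurable (?N \<Otimes>\<^sub>M M)"
    unfolding case_prod_beta by measurable
  then show ?thesis unfolding EZ_def by (rule borel_measurable_lebesgue_integral)
qed

lemma DZ_meas:
  assumes Z: "good Z"
  shows "(\<lambda>y. DZ Z (fst y) (snd y)) \<in> borel_measurable (borel \<Otimes>\<^sub>M borel)"
proof -
  let ?N = "(borel::real measure) \<Otimes>\<^sub>M (borel :: (real^'d) measure)"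
  have "(\<lambda>q. (\<lambda>y. EZ Z (fst (fst y)) (snd (fst y)) (snd y)) ((fst (fst q), snd q), snd (fst q))) \<in> borel_measurable (?N \<Otimes>\<^sub>M borel)"
    by (rule measurable_compose[OF _ EZ_meas[OF Z]]) measurable
  then have A[measurable]: "(\<lambda>q. EZ Z (fst (fst q)) (snd q) (snd (fst q))) \<in> borel_measurable (?N \<Otimes>\<^sub>M borel)"
    by simp
  have B: "case_prod (\<lambda>y s. indicator {0..fst y} s *\<^sub>R EZ Z (fst y) s (snd y)) \<in> borel_measurable (?N \<Otimes>\<^sub>M borel)"
    unfolding case_prod_beta
  proof (rule borel_measurable_scaleR)
    show "(\<lambda>x. indicator {0..fst (fst x)} (snd x) :: real) \<in> borel_measurable (?N \<Otimes>\<^sub>M borel)"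
      unfolding indicator_def of_bool_def atLeastAtMost_iff mem_Collect_eq by measurable
  qed (rule A)
  have "case_prod (\<lambda>y s. indicator {0..fst y} s *\<^sub>R EZ Z (fst y) s (snd y)) \<in> borel_measurable (?N \<Otimes>\<^sub>M lborel)"
  proof -
    have eq: "measurable (?N \<Otimes>\<^sub>M lborel) (borel :: (real^'d) measure) = measurable (?N \<Otimes>\<^sub>M borel) borel"
      by (intro measurable_cong_sets sets_pair_measure_cong) auto
    show ?thesis using B eq by simp
  qed
  then show ?thesis unfolding DZ_def by (rule lborel.borel_measurable_lebesgue_integral)
qed

end

lemma prob_norm_bound:
  fixes g :: "'a \<Rightarrow> 'b::{banach, second_countable_topology}"
  assumes P: "prob_space M" and ae: "AE \<omega> in M. norm (g \<omega>) \<le> B"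
  shows "norm (\<integral>\<omega>. g \<omega> \<partial>M) \<le> B"
proof -
  interpret prob_space M by (rule P)
  have B0: "0 \<le> B"
  proof -
    have "AE \<omega> in M. 0 \<le> B" using ae by eventually_elim (use norm_ge_zero order_trans in blast)
    then show ?thesis by simp
  qed
  show ?thesis
  proof (cases "integrable M g")
    case True
    have "norm (\<integral>\<omega>. g \<omega> \<partial>M) \<le> (\<integral>\<omega>. norm (g \<omega>) \<partial>M)" by (rule integral_norm_bound)
    also have "\<dots> \<le> (\<integral>\<omega>. B \<partial>M)"
      using True ae by (intro integral_mono_AE) auto
    also have "\<dots> = B" by (simp add: prob_space)
    finally show ?thesis .
  next
    case False
    then show ?thesis using B0 by (simp add: not_integrable_integral_eq)
  qed
qed

lemma conv_bound:
  fixes f h :: "real \<Rightarrow> real"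
  assumes fm: "f \<in> borel_measurable borel" and C: "C \<ge> 0" and D: "D \<ge> 0"
    and fb: "\<And>s. s \<in> {0<..<r} \<Longrightarrow> f s \<le> C * h (r - s)"
    and hint: "(\<integral>\<^sup>+ s\<in>{0<..<r}. ennreal (h s) \<partial>lborel) \<le> ennreal D"
  shows "(\<integral>\<^sup>+ s. ennreal (indicator {0..r} s * f s) \<partial>lborel) \<le> ennreal (C * D)"
proof -
  have 1: "(\<integral>\<^sup>+ s. ennreal (indicator {0..r} s * f s) \<partial>lborel) = (\<integral>\<^sup>+ s. ennreal (indicator {0<..<r} s * f s) \<partial>lborel)"
  proof (rule nn_integral_cong_AE)
    have "AE s in lborel. s \<noteq> 0" "AE s in lborel. s \<noteq> r" by (rule AE_lborel_singleton)+
    then show "AE s in lborel. ennreal (indicator {0..r} s * f s) = ennreal (indicator {0<..<r} s * f s)"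
      by eventually_elim (auto simp: indicator_def)
  qed
  have 2: "(\<integral>\<^sup>+ s. ennreal (indicator {0<..<r} s * f s) \<partial>lborel) = (\<integral>\<^sup>+ u. ennreal (indicator {0<..<r} u * f (r - u)) \<partial>lborel)"
  proof -
    have gm: "(\<lambda>s. ennreal (indicator {0<..<r} s * f s)) \<in> borel_measurable borel" using fm by measurable
    note nn_integral_real_affine[OF gm, of "-1" r]
    moreover have "indicator {0<..<r} (r + -1 * u) = (indicator {0<..<r} u :: real)" for u
      by (auto simp: indicator_def)
    ultimately show ?thesis by simp
  qed
  show ?thesis
  proof (cases "C = 0")
    case True
    have "(\<lambda>u. ennreal (indicator {0<..<r} u * f (r - u))) = (\<lambda>u. 0)"
    proof (rule ext)
      fix u show "ennreal (indicator {0<..<r} u * f (r - u)) = 0"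
        using fb[of "r - u"] True by (auto simp: indicator_def ennreal_eq_0_iff)
    qed
    then show ?thesis using 1 2 by simp
  next
    case False
    then have Cp: "C > 0" using C by simp
    have "(\<integral>\<^sup>+ u. ennreal (indicator {0<..<r} u * f (r - u)) \<partial>lborel)
        = (\<integral>\<^sup>+ u. ennreal C * ennreal (indicator {0<..<r} u * f (r - u) / C) \<partial>lborel)"
    proof (rule nn_integral_cong)
      fix u show "ennreal (indicator {0<..<r} u * f (r - u)) = ennreal C * ennreal (indicator {0<..<r} u * f (r - u) / C)"
      proof (cases "indicator {0<..<r} u * f (r - u) \<ge> 0")
        case True then show ?thesis using Cp by (simp add: ennreal_mult[symmetric])
      next
        case False
        then have "indicator {0<..<r} u * f (r - u) / C \<le> 0" using Cp by (simp add: divide_nonpos_pos)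
        then show ?thesis using False by (simp add: ennreal_neg)
      qed
    qed
    also have "\<dots> = ennreal C * (\<integral>\<^sup>+ u. ennreal (indicator {0<..<r} u * f (r - u) / C) \<partial>lborel)"
      by (rule nn_integral_cmult) (use fm in measurable)
    also have "(\<integral>\<^sup>+ u. ennreal (indicator {0<..<r} u * f (r - u) / C) \<partial>lborel) \<le> (\<integral>\<^sup>+ s\<in>{0<..<r}. ennreal (h s) \<partial>lborel)"
    proof (rule nn_integral_mono)
      fix u
      show "ennreal (indicator {0<..<r} u * f (r - u) / C) \<le> ennreal (h u) * indicator {0<..<r} u"
      proof (cases "u \<in> {0<..<r}")
        case True
        then have "f (r - u) \<le> C * h u" using fb[of "r - u"] by auto
        then have "f (r - u) / C \<le> h u" using Cp by (simp add: divide_le_eq mult.commute)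
        then show ?thesis using True by (simp add: ennreal_leI)
      qed simp
    qed
    also note hint
    finally show ?thesis using 1 2 C D
      by (simp add: ennreal_mult[symmetric] mult_left_mono)
  qed
qed

lemma set_int_bound:
  fixes f :: "real \<Rightarrow> 'b::{banach, second_countable_topology}"
  assumes fm: "f \<in> borel_measurable borel" and A: "A \<in> sets borel" and B: "B \<ge> 0"
    and nn: "(\<integral>\<^sup>+ s. ennreal (indicator A s * norm (f s)) \<partial>lborel) \<le> ennreal B"
  shows "set_integrable lborel A f" "norm (LINT s:A|lborel. f s) \<le> B"
proof -
  have eq: "ennreal (norm (indicator A s *\<^sub>R f s)) = ennreal (indicator A s * norm (f s))" for s
    by (auto simp: indicator_def)
  show si: "set_integrable lborel A f"
    unfolding set_integrable_def
  proof (rule integrableI_bounded)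
    show "(\<lambda>s. indicator A s *\<^sub>R f s) \<in> borel_measurable lborel" using fm A by measurable
    show "(\<integral>\<^sup>+ s. ennreal (norm (indicator A s *\<^sub>R f s)) \<partial>lborel) < \<infinity>"
      unfolding eq using nn by (simp add: le_less_trans)
  qed
  have "norm (LINT s:A|lborel. f s) \<le> (\<integral>s. norm (indicator A s *\<^sub>R f s) \<partial>lborel)"
    unfolding set_lebesgue_integral_def by (rule integral_norm_bound)
  also have "\<dots> \<le> B"
    by (rule integral_real_bounded[OF B]) (use nn eq in simp)
  finally show "norm (LINT s:A|lborel. f s) \<le> B" .
qed

lemma cl_id: "s \<in> {0..t} \<Longrightarrow> cl t s = s" by (auto simp: cl_def)

context mv begin

lemma EZ_int:
  assumes Z: "good Z" and s: "s \<in> {0<..<r}" and r: "r \<le> T"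
  shows "integrable M (\<lambda>\<omega>. Lc (r - s) (x - Z (cl T s) \<omega>))"
proof -
  interpret prob_space M by (rule prob)
  have rs: "r - s \<in> {0<..<T}" using s r by auto
  have [measurable]: "Z (cl T s) \<in> borel_measurable M"
    using T_pos by (intro good_M[OF Z]) (auto simp: cl_def)
  show ?thesis
  proof (rule integrable_const_bound[where B="h1 (r - s)"])
    show "AE \<omega> in M. norm (Lc (r - s) (x - Z (cl T s) \<omega>)) \<le> h1 (r - s)"
      using rs h1_bound by (auto simp: Lc_def)
  qed measurable
qed

lemma EZ_bound:
  assumes Z: "good Z" and s: "s \<in> {0<..<r}" and r: "r \<le> T"
  shows "norm (EZ Z r s x) \<le> h1 (r - s)"
proof -
  have rs: "r - s \<in> {0<..<T}" using s r by auto
  show ?thesis unfolding EZ_def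
    by (rule prob_norm_bound[OF prob]) (use rs h1_bound in \<open>auto simp: Lc_def\<close>)
qed

lemma EZ_meas_s: "good Z \<Longrightarrow> (\<lambda>s. EZ Z r s x) \<in> borel_measurable borel"
  using measurable_compose[OF _ EZ_meas, of "\<lambda>s. ((r, s), x)" borel Z] by simp

lemma DZ_props:
  assumes Z: "good Z" and r: "0 \<le> r" "r \<le> T"
  shows "set_integrable lborel {0..r} (\<lambda>s. EZ Z r s x)" "norm (DZ Z r x) \<le> D"
proof -
  have nn: "(\<integral>\<^sup>+ s. ennreal (indicator {0..r} s * norm (EZ Z r s x)) \<partial>lborel) \<le> ennreal (1 * D)"
  proof (rule conv_bound)
    show "(\<lambda>s. norm (EZ Z r s x)) \<in> borel_measurable borel" using EZ_meas_s[OF Z] by measurable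
    show "norm (EZ Z r s x) \<le> 1 * h1 (r - s)" if "s \<in> {0<..<r}" for s
      using EZ_bound[OF Z that r(2)] by simp
  qed (use D_pos h1_int r in auto)
  show "set_integrable lborel {0..r} (\<lambda>s. EZ Z r s x)"
    by (rule set_int_bound(1)[OF EZ_meas_s[OF Z] _ _ ]) (use nn D_pos in auto)
  have "norm (LINT s:{0..r}|lborel. EZ Z r s x) \<le> D"
    by (rule set_int_bound(2)[OF EZ_meas_s[OF Z] _ _ ]) (use nn D_pos in auto)
  then show "norm (DZ Z r x) \<le> D" by (simp add: DZ_def set_lebesgue_integral_def)
qed

lemma DZ_lip:
  assumes Z: "good Z" and Z': "good Z'" and r: "0 \<le> r" "r \<le> T" and c: "c \<ge> 0"
    and ae: "\<And>s. s \<in> {0..r} \<Longrightarrow> AE \<omega> in M. norm (Z s \<omega> - Z' s \<omega>) \<le> c"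
  shows "norm (DZ Z r x - DZ Z' r x') \<le> D * (norm (x - x') + c)"
proof -
  let ?C = "norm (x - x') + c"
  have eq: "DZ Z r x - DZ Z' r x' = (LINT s:{0..r}|lborel. EZ Z r s x - EZ Z' r s x')"
    unfolding DZ_def set_lebesgue_integral_def[symmetric]
    by (rule set_integral_diff(2)[symmetric]) (use DZ_props[OF Z r] DZ_props[OF Z' r] in auto)
  have fb: "norm (EZ Z r s x - EZ Z' r s x') \<le> ?C * h2 (r - s)" if s: "s \<in> {0<..<r}" for s
  proof -
    have rs: "r - s \<in> {0<..<T}" using s r by auto
    have cs: "cl T s = s" using s r by (intro cl_id) auto
    have "EZ Z r s x - EZ Z' r s x' = (\<integral>\<omega>. Lc (r - s) (x - Z (cl T s) \<omega>) - Lc (r - s) (x' - Z' (cl T s) \<omega>) \<partial>M)"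
      unfolding EZ_def by (rule Bochner_Integration.integral_diff[symmetric]) (use EZ_int[OF Z s r(2)] EZ_int[OF Z' s r(2)] in auto)
    also have "norm \<dots> \<le> h2 (r - s) * ?C"
    proof (rule prob_norm_bound[OF prob])
      have sr: "s \<in> {0..r}" using s by auto
      show "AE \<omega> in M. norm (Lc (r - s) (x - Z (cl T s) \<omega>) - Lc (r - s) (x' - Z' (cl T s) \<omega>)) \<le> h2 (r - s) * ?C"
        using ae[OF sr]
      proof eventually_elim
        case (elim \<omega>)
        have "norm (Lc (r - s) (x - Z (cl T s) \<omega>) - Lc (r - s) (x' - Z' (cl T s) \<omega>))
            \<le> h2 (r - s) * norm ((x - Z s \<omega>) - (x' - Z' s \<omega>))"
          using h2_bound[OF rs] rs by (simp add: Lc_def cs)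
        also have "norm ((x - Z s \<omega>) - (x' - Z' s \<omega>)) \<le> ?C"
        proof -
          have e: "(x - Z s \<omega>) - (x' - Z' s \<omega>) = (x - x') - (Z s \<omega> - Z' s \<omega>)" by (simp add: algebra_simps)
          have "norm ((x - Z s \<omega>) - (x' - Z' s \<omega>)) \<le> norm (x - x') + norm (Z s \<omega> - Z' s \<omega>)"
            unfolding e by (rule norm_triangle_ineq4)
          then show ?thesis using elim by simp
        qed
        then have "h2 (r - s) * norm ((x - Z s \<omega>) - (x' - Z' s \<omega>)) \<le> h2 (r - s) * ?C"
          using h2_nn[OF rs] by (rule mult_left_mono)
        finally show ?case .
      qed
    qed
    finally show ?thesis by (simp add: mult.commute)
  qed
  have nn: "(\<integral>\<^sup>+ s. ennreal (indicator {0..r} s * norm (EZ Z r s x - EZ Z' r s x')) \<partial>lborel) \<le> ennreal (?C * D)"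
  proof (rule conv_bound)
    show "(\<lambda>s. norm (EZ Z r s x - EZ Z' r s x')) \<in> borel_measurable borel"
      using EZ_meas_s[OF Z] EZ_meas_s[OF Z'] by measurable
    show "norm (EZ Z r s x - EZ Z' r s x') \<le> ?C * h2 (r - s)" if "s \<in> {0<..<r}" for s
      by (rule fb[OF that])
  qed (use D_pos h2_int r c in auto)
  have "norm (LINT s:{0..r}|lborel. EZ Z r s x - EZ Z' r s x') \<le> ?C * D"
    by (rule set_int_bound(2)) (use nn D_pos c EZ_meas_s[OF Z] EZ_meas_s[OF Z'] in auto)
  then show ?thesis unfolding eq by (simp add: mult.commute)
qed

end

lemma set_int_cong':
  assumes "A \<in> sets M" "\<And>x. x \<in> A \<Longrightarrow> f x = g x"
  shows "(LINT x:A|M. f x) = (LINT x:A|M. g x)"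
  using assms by (intro set_lebesgue_integral_cong) auto


lemma bounded_set_int:
  fixes f :: "real \<Rightarrow> 'b::{banach, second_countable_topology}"
  assumes fm: "f \<in> borel_measurable borel" and ab: "a \<le> b" and B: "B \<ge> 0"
    and fb: "\<And>r. r \<in> {a..b} \<Longrightarrow> norm (f r) \<le> B"
  shows "set_integrable lborel {a..b} f" "norm (LINT r:{a..b}|lborel. f r) \<le> B * (b - a)"
proof -
  have nn: "(\<integral>\<^sup>+ s. ennreal (indicator {a..b} s * norm (f s)) \<partial>lborel) \<le> ennreal (B * (b - a))"
  proof -
    have "(\<integral>\<^sup>+ s. ennreal (indicator {a..b} s * norm (f s)) \<partial>lborel) \<le> (\<integral>\<^sup>+ s. ennreal B * indicator {a..b} s \<partial>lborel)"
      by (rule nn_integral_mono) (auto simp: indicator_def fb ennreal_leI)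
    also have "\<dots> = ennreal B * emeasure lborel {a..b}" by (rule nn_integral_cmult_indicator) simp
    also have "\<dots> = ennreal (B * (b - a))" using ab B by (simp add: ennreal_mult)
    finally show ?thesis .
  qed
  show "set_integrable lborel {a..b} f" by (rule set_int_bound(1)[OF fm _ _ nn]) (use ab B in auto)
  show "norm (LINT r:{a..b}|lborel. f r) \<le> B * (b - a)" by (rule set_int_bound(2)[OF fm _ _ nn]) (use ab B in auto)
qed

context mv begin

lemma drift_eq:
  assumes Z: "good Z" and r: "r \<in> {0..T}"
  shows "mv_drift M L Z r \<omega> = DZ Z r (Z r \<omega>)"
proof -
  have "mv_drift M L Z r \<omega> = (LINT s:{0..r}|lborel. EZ Z r s (Z r \<omega>))"
    unfolding mv_drift_def
  proof (rule set_int_cong')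
    fix s assume s: "s \<in> {0..r}"
    have rs: "r - s \<in> {0..T}" using s r by auto
    have cs: "cl T s = s" using s r by (intro cl_id) auto
    have Zs[measurable]: "Z s \<in> borel_measurable M" using s r by (intro good_M[OF Z]) auto
    have fm: "(\<lambda>y. Lc (r - s) (Z r \<omega> - y)) \<in> borel_measurable borel" by measurable
    have "(\<integral>y. L (r - s) (Z r \<omega> - y) \<partial>distr M borel (Z s)) = (\<integral>y. Lc (r - s) (Z r \<omega> - y) \<partial>distr M borel (Z s))"
      using rs by (simp add: Lc_def)
    also have "\<dots> = (\<integral>\<omega>'. Lc (r - s) (Z r \<omega> - Z s \<omega>') \<partial>M)"
      by (rule integral_distr[OF Zs fm])
    finally show "(\<integral>y. L (r - s) (Z r \<omega> - y) \<partial>distr M borel (Z s)) = EZ Z r s (Z r \<omega>)"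
      by (simp add: EZ_def cs)
  qed auto
  then show ?thesis by (simp add: DZ_def set_lebesgue_integral_def)
qed

lemma drift_bound: "good Z \<Longrightarrow> r \<in> {0..T} \<Longrightarrow> norm (mv_drift M L Z r \<omega>) \<le> D"
proof -
  assume Z: "good Z" and r: "r \<in> {0..T}"
  show ?thesis unfolding drift_eq[OF Z r] using r by (intro DZ_props(2)[OF Z]) auto
qed

lemma drift_lip:
  assumes Z: "good Z" and Z': "good Z'" and r: "r \<in> {0..T}" and c: "c \<ge> 0"
    and ae: "\<And>s. s \<in> {0..r} \<Longrightarrow> AE \<omega> in M. norm (Z s \<omega> - Z' s \<omega>) \<le> c"
    and pt: "norm (Z r \<omega> - Z' r \<omega>) \<le> c"
  shows "norm (mv_drift M L Z r \<omega> - mv_drift M L Z' r \<omega>) \<le> 2 * D * c"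
proof -
  have "norm (mv_drift M L Z r \<omega> - mv_drift M L Z' r \<omega>) \<le> D * (norm (Z r \<omega> - Z' r \<omega>) + c)"
    unfolding drift_eq[OF Z r] drift_eq[OF Z' r]
    by (rule DZ_lip[OF Z Z' _ _ c ae]) (use r in auto)
  also have "\<dots> \<le> D * (c + c)" using pt D_pos by (intro mult_left_mono) auto
  finally show ?thesis by simp
qed

lemma drift_slice_meas:
  assumes Z: "good Z" and t: "t \<in> {0..T}" and om: "\<omega> \<in> space M"
  shows "(\<lambda>r. DZ Z r (Z (cl t r) \<omega>)) \<in> borel_measurable borel"
proof -
  have a: "(\<lambda>r. (\<lambda>(\<omega>, s). Z (cl t s) \<omega>) (\<omega>, r)) \<in> borel_measurable borel"
    by (rule measurable_Pair2[OF good_prog[OF Z t]]) (simp add: space_F om)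
  have "(\<lambda>r. (\<lambda>y. DZ Z (fst y) (snd y)) (r, Z (cl t r) \<omega>)) \<in> borel_measurable borel"
    by (rule measurable_compose[OF _ DZ_meas[OF Z]]) (use a in simp)
  then show ?thesis by simp
qed

lemma drift_eq_cl:
  assumes Z: "good Z" and t: "t \<in> {0..T}" and r: "r \<in> {0..t}"
  shows "mv_drift M L Z r \<omega> = DZ Z r (Z (cl t r) \<omega>)"
proof -
  have r': "r \<in> {0..T}" using r t by auto
  show ?thesis using drift_eq[OF Z r'] cl_id[OF r] by simp
qed

lemma drift_int:
  assumes Z: "good Z" and t: "t \<in> {0..T}" and om: "\<omega> \<in> space M"
  shows "set_integrable lborel {0..t} (\<lambda>r. mv_drift M L Z r \<omega>)"
    "norm (LINT r:{0..t}|lborel. mv_drift M L Z r \<omega>) \<le> D * t"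
proof -
  have eq: "set_integrable lborel {0..t} (\<lambda>r. mv_drift M L Z r \<omega>) = set_integrable lborel {0..t} (\<lambda>r. DZ Z r (Z (cl t r) \<omega>))"
    "(LINT r:{0..t}|lborel. mv_drift M L Z r \<omega>) = (LINT r:{0..t}|lborel. DZ Z r (Z (cl t r) \<omega>))"
    by (rule set_integrable_cong[OF refl refl drift_eq_cl[OF Z t]], assumption)
      (rule set_int_cong', simp, rule drift_eq_cl[OF Z t], assumption)
  have b: "norm (DZ Z r (Z (cl t r) \<omega>)) \<le> D" if "r \<in> {0..t}" for r
    using that t by (intro DZ_props(2)[OF Z]) auto
  show "set_integrable lborel {0..t} (\<lambda>r. mv_drift M L Z r \<omega>)"
    unfolding eq by (rule bounded_set_int(1)[OF drift_slice_meas[OF Z t om] _ _ b]) (use t D_pos in auto)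
  show "norm (LINT r:{0..t}|lborel. mv_drift M L Z r \<omega>) \<le> D * t"
  proof -
    have "norm (LINT r:{0..t}|lborel. DZ Z r (Z (cl t r) \<omega>)) \<le> D * (t - 0)"
      by (rule bounded_set_int(2)[OF drift_slice_meas[OF Z t om]]) (use t D_pos b in auto)
    then show ?thesis unfolding eq by simp
  qed
qed

definition II where "II Z t \<omega> = (LINT r:{0..t}|lborel. mv_drift M L Z r \<omega>)"

definition Phi where "Phi Z t \<omega> = X0 \<omega> + W t \<omega> + II Z t \<omega>"

lemma II_meas:
  assumes Z: "good Z" and t: "t \<in> {0..T}"
  shows "II Z t \<in> borel_measurable (F t)"
proof -
  have "(\<lambda>q. (\<lambda>y. DZ Z (fst y) (snd y)) (snd q, (\<lambda>(\<omega>, s). Z (cl t s) \<omega>) q)) \<in> borel_measurable (F t \<Otimes>\<^sub>M borel)"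
    by (rule measurable_compose[OF _ DZ_meas[OF Z]]) (use good_prog[OF Z t] in measurable)
  then have A[measurable]: "(\<lambda>q. DZ Z (snd q) (Z (cl t (snd q)) (fst q))) \<in> borel_measurable (F t \<Otimes>\<^sub>M borel)"
    by (simp add: case_prod_beta)
  have B: "case_prod (\<lambda>\<omega> r. indicator {0..t} r *\<^sub>R DZ Z r (Z (cl t r) \<omega>)) \<in> borel_measurable (F t \<Otimes>\<^sub>M borel)"
    unfolding case_prod_beta by measurable
  have eq: "measurable (F t \<Otimes>\<^sub>M lborel) (borel :: (real^'d) measure) = measurable (F t \<Otimes>\<^sub>M borel) borel"
    by (intro measurable_cong_sets sets_pair_measure_cong) auto
  have "case_prod (\<lambda>\<omega> r. indicator {0..t} r *\<^sub>R DZ Z r (Z (cl t r) \<omega>)) \<in> borel_measurable (F t \<Otimes>\<^sub>M lborel)"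
    using B eq by simp
  then have C: "(\<lambda>\<omega>. \<integral>r. indicator {0..t} r *\<^sub>R DZ Z r (Z (cl t r) \<omega>) \<partial>lborel) \<in> borel_measurable (F t)"
    by (rule lborel.borel_measurable_lebesgue_integral)
  show ?thesis
  proof (rule measurable_cong[THEN iffD1, OF _ C])
    fix \<omega> assume "\<omega> \<in> space (F t)"
    show "(\<integral>r. indicator {0..t} r *\<^sub>R DZ Z r (Z (cl t r) \<omega>) \<partial>lborel) = II Z t \<omega>"
      unfolding II_def set_lebesgue_integral_def[symmetric]
      by (rule set_int_cong', simp, rule drift_eq_cl[OF Z t, symmetric], assumption)
  qed
qed

lemma II_cont:
  assumes Z: "good Z" and om: "\<omega> \<in> space M"
  shows "continuous_on {0..T} (\<lambda>t. II Z t \<omega>)"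
proof -
  have si: "set_integrable lborel {0..T} (\<lambda>r. mv_drift M L Z r \<omega>)"
    using drift_int(1)[OF Z _ om, of T] T_pos by auto
  have io: "(\<lambda>r. mv_drift M L Z r \<omega>) integrable_on {0..T}"
    by (rule set_borel_integral_eq_integral(1)[OF si])
  have "continuous_on {0..T} (\<lambda>t. integral {0..t} (\<lambda>r. mv_drift M L Z r \<omega>))"
    by (rule indefinite_integral_continuous_1[OF io])
  moreover have eqs: "II Z t \<omega> = integral {0..t} (\<lambda>r. mv_drift M L Z r \<omega>)" if "t \<in> {0..T}" for t
    unfolding II_def by (rule set_borel_integral_eq_integral(2)[OF drift_int(1)[OF Z that om]])
  ultimately show ?thesis by (simp only: continuous_on_cong[OF refl eqs])
qed

lemma bm_props:
  shows "\<And>t. t \<in> {0..T} \<Longrightarrow> W t \<in> borel_measurable (F t)"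
    and "\<And>\<omega>. \<omega> \<in> space M \<Longrightarrow> continuous_on {0..T} (\<lambda>t. W t \<omega>)"
  using bm by (auto simp: brownian_motion_def)

lemma X0_meas_t: "t \<in> {0..T} \<Longrightarrow> X0 \<in> borel_measurable (F t)"
  by (rule meas_F_mono[OF _ X0_meas]) auto

lemma good_init: "good (\<lambda>t \<omega>. X0 \<omega> + W t \<omega>)"
  unfolding good_def
proof (intro conjI ballI)
  fix t assume t: "t \<in> {0..T}"
  show "(\<lambda>\<omega>. X0 \<omega> + W t \<omega>) \<in> borel_measurable (F t)"
    using X0_meas_t[OF t] bm_props(1)[OF t] by measurable
next
  fix \<omega> assume "\<omega> \<in> space M"
  then show "continuous_on {0..T} (\<lambda>t. X0 \<omega> + W t \<omega>)"
    by (intro continuous_intros bm_props(2))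
qed

lemma good_Phi: "good Z \<Longrightarrow> good (Phi Z)"
  unfolding good_def[of "Phi Z"] Phi_def
proof (intro conjI ballI)
  fix t assume Z: "good Z" and t: "t \<in> {0..T}"
  show "(\<lambda>\<omega>. X0 \<omega> + W t \<omega> + II Z t \<omega>) \<in> borel_measurable (F t)"
    using X0_meas_t[OF t] bm_props(1)[OF t] II_meas[OF Z t] by measurable
next
  fix \<omega> assume Z: "good Z" and om: "\<omega> \<in> space M"
  then show "continuous_on {0..T} (\<lambda>t. X0 \<omega> + W t \<omega> + II Z t \<omega>)"
    by (intro continuous_intros bm_props(2) II_cont)
qed

end

lemma exp_set_int:
  fixes l A t :: real
  assumes l: "l > 0" and t: "0 \<le> t"
  shows "set_integrable lborel {0..t} (\<lambda>r. A * exp (l * r))"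
    "(LINT r:{0..t}|lborel. A * exp (l * r)) = A * (exp (l * t) - 1) / l"
proof -
  have c: "continuous_on {0..t} (\<lambda>r. A * exp (l * r))" by (intro continuous_intros)
  show "set_integrable lborel {0..t} (\<lambda>r. A * exp (l * r))"
    by (rule borel_integrable_atLeastAtMost'[OF c])
  have d: "((\<lambda>r. A * exp (l * r) / l) has_vector_derivative A * exp (l * x)) (at x within {0..t})" for x
  proof -
    have "((\<lambda>r. A * exp (l * r) / l) has_real_derivative A * exp (l * x)) (at x within {0..t})"
      using l by (auto intro!: derivative_eq_intros)
    then show ?thesis by (simp add: has_real_derivative_iff_has_vector_derivative)
  qed
  have "(\<integral>r. indicator {0..t} r *\<^sub>R (A * exp (l * r)) \<partial>lborel) = A * exp (l * t) / l - A * exp (l * 0) / l"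
    by (rule integral_FTC_atLeastAtMost[OF t d c])
  then show "(LINT r:{0..t}|lborel. A * exp (l * r)) = A * (exp (l * t) - 1) / l"
    unfolding set_lebesgue_integral_def by (simp add: diff_divide_distrib right_diff_distrib)
qed

context mv begin

lemma contract:
  assumes Z: "good Z" and Z': "good Z'" and K: "K \<ge> 0" and t: "t \<in> {0..T}" and om: "\<omega> \<in> space M"
    and ae: "\<And>s. s \<in> {0..T} \<Longrightarrow> AE \<omega>' in M. norm (Z s \<omega>' - Z' s \<omega>') \<le> K * exp (4 * D * s)"
    and pt: "\<And>r. r \<in> {0..t} \<Longrightarrow> norm (Z r \<omega> - Z' r \<omega>) \<le> K * exp (4 * D * r)"
  shows "norm (II Z t \<omega> - II Z' t \<omega>) \<le> K / 2 * exp (4 * D * t)"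
proof -
  have si: "set_integrable lborel {0..t} (\<lambda>r. mv_drift M L Z r \<omega>)"
    "set_integrable lborel {0..t} (\<lambda>r. mv_drift M L Z' r \<omega>)"
    using drift_int(1)[OF Z t om] drift_int(1)[OF Z' t om] .
  have t0: "0 \<le> t" using t by auto
  have l: "4 * D > 0" using D_pos by simp
  have eq: "II Z t \<omega> - II Z' t \<omega> = (LINT r:{0..t}|lborel. mv_drift M L Z r \<omega> - mv_drift M L Z' r \<omega>)"
    unfolding II_def by (rule set_integral_diff(2)[OF si, symmetric])
  have pw: "norm (mv_drift M L Z r \<omega> - mv_drift M L Z' r \<omega>) \<le> (2 * D * K) * exp (4 * D * r)"
    if r: "r \<in> {0..t}" for r
  proof -
    have rT: "r \<in> {0..T}" using r t by auto
    have "norm (mv_drift M L Z r \<omega> - mv_drift M L Z' r \<omega>) \<le> 2 * D * (K * exp (4 * D * r))"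
    proof (rule drift_lip[OF Z Z' rT])
      show "0 \<le> K * exp (4 * D * r)" using K by simp
      show "norm (Z r \<omega> - Z' r \<omega>) \<le> K * exp (4 * D * r)" by (rule pt[OF r])
      fix s assume s: "s \<in> {0..r}"
      have sT: "s \<in> {0..T}" using s rT by auto
      have ineq: "K * exp (4 * D * s) \<le> K * exp (4 * D * r)"
        using s K D_pos by (intro mult_left_mono) (auto intro!: mult_left_mono)
      from ae[OF sT] show "AE \<omega> in M. norm (Z s \<omega> - Z' s \<omega>) \<le> K * exp (4 * D * r)"
        by (rule eventually_mono) (use ineq in linarith)
    qed
    then show ?thesis by (simp add: mult.assoc)
  qed
  have "norm (II Z t \<omega> - II Z' t \<omega>) \<le> (LINT r:{0..t}|lborel. norm (mv_drift M L Z r \<omega> - mv_drift M L Z' r \<omega>))"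
    unfolding eq by (rule set_integral_norm_bound) (rule set_integral_diff(1)[OF si])
  also have "\<dots> \<le> (LINT r:{0..t}|lborel. (2 * D * K) * exp (4 * D * r))"
    by (rule set_integral_mono[OF set_integrable_norm[OF set_integral_diff(1)[OF si]] exp_set_int(1)[OF l t0] pw])
  also have "\<dots> = (2 * D * K) * (exp (4 * D * t) - 1) / (4 * D)"
    by (rule exp_set_int(2)[OF l t0])
  also have "\<dots> = K / 2 * (exp (4 * D * t) - 1)" using D_pos by (simp add: field_simps)
  also have "\<dots> \<le> K / 2 * exp (4 * D * t)" using K by (intro mult_left_mono) auto
  finally show ?thesis .
qed

end

lemma geom_conv:
  fixes x :: "nat \<Rightarrow> 'b::banach"
  assumes b: "\<And>n. norm (x (Suc n) - x n) \<le> C * (1/2)^n"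
  shows "x \<longlonglongrightarrow> lim x" "\<And>n. norm (lim x - x n) \<le> 2 * C * (1/2)^n"
proof -
  let ?d = "\<lambda>k. x (Suc k) - x k"
  have sg: "summable (\<lambda>k. C * (1/2::real)^k)" by (intro summable_mult summable_geometric) simp
  have sd: "summable (\<lambda>k. norm (?d k))"
    by (rule summable_comparison_test'[OF sg, of 0]) (use b in simp)
  then have s: "summable ?d" by (rule summable_norm_cancel)
  have xe: "x n = x 0 + (\<Sum>k<n. ?d k)" for n by (simp add: sum_lessThan_telescope)
  have "(\<lambda>n. x 0 + (\<Sum>k<n. ?d k)) \<longlonglongrightarrow> x 0 + suminf ?d"
    by (intro tendsto_add tendsto_const summable_LIMSEQ s)
  then have xl: "x \<longlonglongrightarrow> x 0 + suminf ?d" by (simp add: xe[symmetric])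
  then have lx: "lim x = x 0 + suminf ?d" by (rule limI)
  show "x \<longlonglongrightarrow> lim x" using xl lx by simp
  fix n
  have "lim x - x n = suminf ?d - (\<Sum>k<n. ?d k)" by (simp add: lx xe[of n])
  also have "\<dots> = (\<Sum>k. ?d (k + n))" by (rule suminf_minus_initial_segment[OF s, symmetric])
  finally have e: "lim x - x n = (\<Sum>k. ?d (k + n))" .
  have sdn: "summable (\<lambda>k. norm (?d (k + n)))" using sd by (rule summable_ignore_initial_segment)
  have sgn: "summable (\<lambda>k. C * (1/2::real)^(k + n))"
    using sg by (rule summable_ignore_initial_segment)
  have "norm (\<Sum>k. ?d (k + n)) \<le> (\<Sum>k. norm (?d (k + n)))" by (rule summable_norm[OF sdn])
  also have "\<dots> \<le> (\<Sum>k. C * (1/2::real)^(k + n))"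
    by (rule suminf_le[OF _ sdn sgn]) (use b in simp)
  also have "(\<Sum>k. C * (1/2::real)^(k + n)) = C * (1/2)^n * (\<Sum>k. (1/2::real)^k)"
    by (subst suminf_mult[symmetric]) (auto simp: power_add mult_ac)
  also have "\<dots> = 2 * C * (1/2)^n" by (simp add: suminf_geometric)
  finally show "norm (lim x - x n) \<le> 2 * C * (1/2)^n" unfolding e .
qed

context mv begin

definition Xn where "Xn n = (Phi ^^ n) (\<lambda>t \<omega>. X0 \<omega> + W t \<omega>)"

lemma Xn_Suc: "Xn (Suc n) = Phi (Xn n)" by (simp add: Xn_def)

lemma good_Xn: "good (Xn n)"
  by (induction n) (simp_all add: Xn_def good_init good_Phi)

lemma Xn_step:
  "\<omega> \<in> space M \<Longrightarrow> t \<in> {0..T} \<Longrightarrow> norm (Xn (Suc n) t \<omega> - Xn n t \<omega>) \<le> (D * T) / 2^n * exp (4 * D * t)"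
proof (induction n arbitrary: \<omega> t)
  case 0
  have "norm (Xn (Suc 0) t \<omega> - Xn 0 t \<omega>) = norm (II (Xn 0) t \<omega>)"
    by (simp add: Xn_Suc Phi_def) (simp add: Xn_def)
  also have "\<dots> \<le> D * t" unfolding II_def by (rule drift_int(2)[OF good_Xn 0(2) 0(1)])
  also have "\<dots> \<le> D * T" using 0 D_pos by (intro mult_left_mono) auto
  also have "\<dots> \<le> D * T * exp (4 * D * t)"
  proof -
    have "1 \<le> exp (4 * D * t)" using 0 D_pos by simp
    then show ?thesis using mult_left_mono[of 1 "exp (4 * D * t)" "D * T"] D_pos T_pos by simp
  qed
  finally show ?case by simp
next
  case (Suc n)
  have "norm (Xn (Suc (Suc n)) t \<omega> - Xn (Suc n) t \<omega>) = norm (II (Xn (Suc n)) t \<omega> - II (Xn n) t \<omega>)"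
    by (simp add: Xn_Suc[of "Suc n"] Xn_Suc[of n] Phi_def)
  also have "\<dots> \<le> ((D * T) / 2^n) / 2 * exp (4 * D * t)"
  proof (rule contract[OF good_Xn good_Xn _ Suc.prems(2,1)])
    show "0 \<le> D * T / 2 ^ n" using D_pos T_pos by simp
    show "AE \<omega>' in M. norm (Xn (Suc n) s \<omega>' - Xn n s \<omega>') \<le> D * T / 2 ^ n * exp (4 * D * s)" if "s \<in> {0..T}" for s
      using Suc.IH that by auto
    show "norm (Xn (Suc n) r \<omega> - Xn n r \<omega>) \<le> D * T / 2 ^ n * exp (4 * D * r)" if "r \<in> {0..t}" for r
      using Suc.IH Suc.prems that by auto
  qed
  also have "((D * T) / 2^n) / 2 = (D * T) / 2^(Suc n)" by simp
  finally show ?case .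
qed

definition Xlim where "Xlim t \<omega> = lim (\<lambda>n. Xn n t \<omega>)"

lemma Xlim_conv:
  assumes om: "\<omega> \<in> space M" and t: "t \<in> {0..T}"
  shows "(\<lambda>n. Xn n t \<omega>) \<longlonglongrightarrow> Xlim t \<omega>"
    "\<And>n. norm (Xlim t \<omega> - Xn n t \<omega>) \<le> 2 * (D * T * exp (4 * D * T)) * (1/2)^n"
proof -
  have b: "norm (Xn (Suc n) t \<omega> - Xn n t \<omega>) \<le> (D * T * exp (4 * D * T)) * (1/2)^n" for n
  proof -
    have "norm (Xn (Suc n) t \<omega> - Xn n t \<omega>) \<le> (D * T) / 2^n * exp (4 * D * t)" by (rule Xn_step[OF om t])
    also have "\<dots> \<le> (D * T) / 2^n * exp (4 * D * T)"
      using t D_pos T_pos by (intro mult_left_mono) auto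
    also have "\<dots> = (D * T * exp (4 * D * T)) * (1/2)^n" by (simp add: field_simps)
    finally show ?thesis .
  qed
  show "(\<lambda>n. Xn n t \<omega>) \<longlonglongrightarrow> Xlim t \<omega>" unfolding Xlim_def by (rule geom_conv(1)[OF b])
  show "norm (Xlim t \<omega> - Xn n t \<omega>) \<le> 2 * (D * T * exp (4 * D * T)) * (1/2)^n" for n
    unfolding Xlim_def by (rule geom_conv(2)[OF b])
qed

lemma good_Xlim: "good Xlim"
  unfolding good_def
proof (intro conjI ballI)
  fix t assume t: "t \<in> {0..T}"
  show "Xlim t \<in> borel_measurable (F t)"
  proof (rule borel_measurable_LIMSEQ_metric)
    show "Xn i t \<in> borel_measurable (F t)" for i using good_Xn t by (auto simp: good_def)
    show "(\<lambda>i. Xn i t \<omega>) \<longlonglongrightarrow> Xlim t \<omega>" if "\<omega> \<in> space (F t)" for \<omega>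
      using Xlim_conv(1)[OF _ t] that by (simp add: space_F)
  qed
next
  fix \<omega> assume om: "\<omega> \<in> space M"
  let ?C = "2 * (D * T * exp (4 * D * T))"
  show "continuous_on {0..T} (\<lambda>t. Xlim t \<omega>)"
  proof (rule uniform_limit_theorem[where f="\<lambda>n t. Xn n t \<omega>" and F=sequentially])
    show "\<forall>\<^sub>F n in sequentially. continuous_on {0..T} (\<lambda>t. Xn n t \<omega>)"
      using good_Xn om by (auto simp: good_def)
    show "uniform_limit {0..T} (\<lambda>n t. Xn n t \<omega>) (\<lambda>t. Xlim t \<omega>) sequentially"
    proof (rule uniform_limitI)
      fix e :: real assume e: "e > 0"
      have "(\<lambda>n. ?C * (1/2::real)^n) \<longlonglongrightarrow> ?C * 0"
        by (intro tendsto_mult tendsto_const LIMSEQ_power_zero) simp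
      then have "\<forall>\<^sub>F n in sequentially. ?C * (1/2::real)^n < e" using e by (simp add: order_tendsto_iff)
      then show "\<forall>\<^sub>F n in sequentially. \<forall>t\<in>{0..T}. dist (Xn n t \<omega>) (Xlim t \<omega>) < e"
      proof (rule eventually_mono)
        fix n assume n: "?C * (1/2::real)^n < e"
        show "\<forall>t\<in>{0..T}. dist (Xn n t \<omega>) (Xlim t \<omega>) < e"
        proof
          fix t assume t: "t \<in> {0..T}"
          have "dist (Xn n t \<omega>) (Xlim t \<omega>) = norm (Xlim t \<omega> - Xn n t \<omega>)" by (simp add: dist_norm norm_minus_commute)
          also have "\<dots> \<le> ?C * (1/2)^n" by (rule Xlim_conv(2)[OF om t])
          finally show "dist (Xn n t \<omega>) (Xlim t \<omega>) < e" using n by simp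
        qed
      qed
    qed
  qed simp
qed

lemma Xlim_fix:
  assumes om: "\<omega> \<in> space M" and t: "t \<in> {0..T}"
  shows "Xlim t \<omega> = Phi Xlim t \<omega>"
proof -
  let ?C = "2 * (D * T * exp (4 * D * T))"
  have C0: "?C \<ge> 0" using D_pos T_pos by simp
  have bd: "norm (II Xlim t \<omega> - II (Xn n) t \<omega>) \<le> (?C * (1/2)^n) / 2 * exp (4 * D * t)" for n
  proof (rule contract[OF good_Xlim good_Xn _ t om])
    show "0 \<le> ?C * (1/2)^n" using C0 by simp
    have u: "norm (Xlim s \<omega>' - Xn n s \<omega>') \<le> ?C * (1/2)^n * exp (4 * D * s)"
      if "s \<in> {0..T}" "\<omega>' \<in> space M" for s \<omega>'
    proof -
      have "norm (Xlim s \<omega>' - Xn n s \<omega>') \<le> ?C * (1/2)^n" by (rule Xlim_conv(2)[OF that(2,1)])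
      also have "\<dots> \<le> ?C * (1/2)^n * exp (4 * D * s)"
      proof -
        have "1 \<le> exp (4 * D * s)" using that D_pos by simp
        then show ?thesis using mult_left_mono[of 1 "exp (4 * D * s)" "?C * (1/2)^n"] C0 by simp
      qed
      finally show ?thesis .
    qed
    show "AE \<omega>' in M. norm (Xlim s \<omega>' - Xn n s \<omega>') \<le> ?C * (1/2)^n * exp (4 * D * s)" if "s \<in> {0..T}" for s
      using u that by auto
    show "norm (Xlim r \<omega> - Xn n r \<omega>) \<le> ?C * (1/2)^n * exp (4 * D * r)" if "r \<in> {0..t}" for r
      using u[of r \<omega>] that t om by auto
  qed
  have "(\<lambda>n. II (Xn n) t \<omega>) \<longlonglongrightarrow> II Xlim t \<omega>"
  proof -
    have "(\<lambda>n. II Xlim t \<omega> - II (Xn n) t \<omega>) \<longlonglongrightarrow> 0"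
    proof (rule Lim_null_comparison)
      show "\<forall>\<^sub>F n in sequentially. norm (II Xlim t \<omega> - II (Xn n) t \<omega>) \<le> (?C * (1/2)^n) / 2 * exp (4 * D * t)"
        using bd by simp
      have "(\<lambda>n. (?C * (1/2::real)^n) / 2 * exp (4 * D * t)) \<longlonglongrightarrow> (?C * 0) / 2 * exp (4 * D * t)"
        by (intro tendsto_intros LIMSEQ_power_zero) simp_all
      then show "(\<lambda>n. (?C * (1/2::real)^n) / 2 * exp (4 * D * t)) \<longlonglongrightarrow> 0" by simp
    qed
    then have "(\<lambda>n. II Xlim t \<omega> - (II Xlim t \<omega> - II (Xn n) t \<omega>)) \<longlonglongrightarrow> II Xlim t \<omega> - 0"
      by (intro tendsto_diff tendsto_const)
    then show ?thesis by simp
  qed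
  then have "(\<lambda>n. Xn (Suc n) t \<omega>) \<longlonglongrightarrow> Phi Xlim t \<omega>"
    unfolding Xn_Suc Phi_def by (intro tendsto_add tendsto_const)
  moreover have "(\<lambda>n. Xn (Suc n) t \<omega>) \<longlonglongrightarrow> Xlim t \<omega>"
    using Xlim_conv(1)[OF om t] by (rule LIMSEQ_Suc)
  ultimately show ?thesis using LIMSEQ_unique by blast
qed

end

context mv begin

lemma sol_good: "mv_solution M F T W X0 L Y \<Longrightarrow> good Y"
  by (simp add: mv_solution_def good_def)

lemma sol_eq: "mv_solution M F T W X0 L Y \<Longrightarrow> AE \<omega> in M. \<forall>t\<in>{0..T}. Y t \<omega> = Phi Y t \<omega>"
  by (simp add: mv_solution_def Phi_def II_def)

lemma existence: "mv_solution M F T W X0 L Xlim"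
proof -
  have g: "good Xlim" by (rule good_Xlim)
  have "AE \<omega> in M. \<forall>t\<in>{0..T}. Xlim t \<omega> = X0 \<omega> + W t \<omega> + (\<integral>r\<in>{0..t}. mv_drift M L Xlim r \<omega> \<partial>lborel)"
  proof (rule AE_I2, intro ballI)
    fix \<omega> t assume "\<omega> \<in> space M" "t \<in> {0..T}"
    then show "Xlim t \<omega> = X0 \<omega> + W t \<omega> + (\<integral>r\<in>{0..t}. mv_drift M L Xlim r \<omega> \<partial>lborel)"
      using Xlim_fix by (simp add: Phi_def II_def)
  qed
  then show ?thesis using g unfolding mv_solution_def good_def by blast
qed

lemma uniqueness:
  assumes Y: "mv_solution M F T W X0 L Y"
  shows "AE \<omega> in M. \<forall>t\<in>{0..T}. Xlim t \<omega> = Y t \<omega>"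
proof -
  have gY: "good Y" by (rule sol_good[OF Y])
  have YE: "AE \<omega> in M. \<forall>t\<in>{0..T}. Y t \<omega> = Phi Y t \<omega>" by (rule sol_eq[OF Y])
  have diff: "Xlim t \<omega> - Y t \<omega> = II Xlim t \<omega> - II Y t \<omega>"
    if "\<omega> \<in> space M" "t \<in> {0..T}" "Y t \<omega> = Phi Y t \<omega>" for t \<omega>
    using Xlim_fix[OF that(1,2)] that(3) by (simp add: Phi_def)
  have step: "AE \<omega> in M. \<forall>t\<in>{0..T}. norm (Xlim t \<omega> - Y t \<omega>) \<le> (2 * D * T) / 2^n * exp (4 * D * t)" for n
  proof (induction n)
    case 0
    show ?case using YE AE_space
    proof eventually_elim
      case (elim \<omega>)
      show ?case
      proof
        fix t assume t: "t \<in> {0..T}"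
        have "norm (Xlim t \<omega> - Y t \<omega>) = norm (II Xlim t \<omega> - II Y t \<omega>)"
          using diff[OF elim(2) t] elim(1) t by simp
        also have "\<dots> \<le> norm (II Xlim t \<omega>) + norm (II Y t \<omega>)" by (rule norm_triangle_ineq4)
        also have "\<dots> \<le> D * t + D * t"
          unfolding II_def by (intro add_mono drift_int(2)[OF good_Xlim t elim(2)] drift_int(2)[OF gY t elim(2)])
        also have "\<dots> \<le> 2 * D * T" using t D_pos by simp
        also have "\<dots> \<le> 2 * D * T * exp (4 * D * t)"
        proof -
          have "1 \<le> exp (4 * D * t)" using t D_pos by simp
          then show ?thesis using mult_left_mono[of 1 "exp (4 * D * t)" "2 * D * T"] D_pos T_pos by simp
        qed
        finally show "norm (Xlim t \<omega> - Y t \<omega>) \<le> (2 * D * T) / 2^0 * exp (4 * D * t)" by simp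
      qed
    qed
  next
    case (Suc n)
    let ?K = "(2 * D * T) / 2^n"
    have K0: "?K \<ge> 0" using D_pos T_pos by simp
    have aes: "AE \<omega>' in M. norm (Xlim s \<omega>' - Y s \<omega>') \<le> ?K * exp (4 * D * s)" if s: "s \<in> {0..T}" for s
      using Suc.IH by (rule eventually_mono) (use s in blast)
    show ?case using Suc.IH YE AE_space
    proof eventually_elim
      case (elim \<omega>)
      show ?case
      proof
        fix t assume t: "t \<in> {0..T}"
        have "norm (Xlim t \<omega> - Y t \<omega>) = norm (II Xlim t \<omega> - II Y t \<omega>)"
          using diff[OF elim(3) t] elim(2) t by simp
        also have "\<dots> \<le> ?K / 2 * exp (4 * D * t)"
        proof (rule contract[OF good_Xlim gY K0 t elim(3) aes])
          fix r assume r: "r \<in> {0..t}"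
          then have "r \<in> {0..T}" using t by auto
          then show "norm (Xlim r \<omega> - Y r \<omega>) \<le> ?K * exp (4 * D * r)" using elim(1) by blast
        qed
        also have "?K / 2 = (2 * D * T) / 2^(Suc n)" by simp
        finally show "norm (Xlim t \<omega> - Y t \<omega>) \<le> (2 * D * T) / 2^(Suc n) * exp (4 * D * t)" .
      qed
    qed
  qed
  then have "AE \<omega> in M. \<forall>n. \<forall>t\<in>{0..T}. norm (Xlim t \<omega> - Y t \<omega>) \<le> (2 * D * T) / 2^n * exp (4 * D * t)"
    by (simp add: AE_all_countable)
  then show ?thesis
  proof (rule eventually_mono, intro ballI)
    fix \<omega> t
    assume A: "\<forall>n. \<forall>t\<in>{0..T}. norm (Xlim t \<omega> - Y t \<omega>) \<le> (2 * D * T) / 2^n * exp (4 * D * t)"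
      and t: "t \<in> {0..T}"
    have lim: "(\<lambda>n. (2 * D * T * exp (4 * D * t)) * (1/2::real)^n) \<longlonglongrightarrow> (2 * D * T * exp (4 * D * t)) * 0"
      by (intro tendsto_mult tendsto_const LIMSEQ_power_zero) simp
    have "norm (Xlim t \<omega> - Y t \<omega>) \<le> (2 * D * T * exp (4 * D * t)) * 0"
    proof (rule LIMSEQ_le_const[OF lim], intro exI allI impI)
      fix n :: nat
      have "norm (Xlim t \<omega> - Y t \<omega>) \<le> (2 * D * T) / 2^n * exp (4 * D * t)" using A t by blast
      also have "\<dots> = (2 * D * T * exp (4 * D * t)) * (1/2)^n" by (simp add: field_simps)
      finally show "norm (Xlim t \<omega> - Y t \<omega>) \<le> (2 * D * T * exp (4 * D * t)) * (1/2)^n" .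
    qed
    then show "Xlim t \<omega> = Y t \<omega>" by simp
  qed
qed

end

theorem theorem6p1:
  fixes T D :: real
    and L :: "real \<Rightarrow> real ^ 'd \<Rightarrow> real ^ 'd"
    and h1 h2 :: "real \<Rightarrow> real"
    and M :: "'a measure" and F :: "real \<Rightarrow> 'a measure"
    and W :: "real \<Rightarrow> 'a \<Rightarrow> real ^ 'd" and X0 :: "'a \<Rightarrow> real ^ 'd"
    and q0 :: "(real ^ 'd) measure"
  assumes "T > 0"
    and "(\<lambda>(t, x). L t x) \<in> borel_measurable (restrict_space borel ({0..T} \<times> UNIV))"
    and "\<And>t x. t \<in> {0<..<T} \<Longrightarrow> norm (L t x) \<le> h1 t"
    and "\<And>t x y. t \<in> {0<..<T} \<Longrightarrow> norm (L t x - L t y) \<le> h2 t * norm (x - y)"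
    and "\<And>t. t \<in> {0<..<T} \<Longrightarrow> h1 t \<ge> 0"
    and "\<And>t. t \<in> {0<..<T} \<Longrightarrow> h2 t \<ge> 0"
    and "D > 0"
    and "\<And>t. t \<le> T \<Longrightarrow> (\<integral>\<^sup>+ s\<in>{0<..<t}. ennreal (h1 s) \<partial>lborel) \<le> ennreal D"
    and "\<And>t. t \<le> T \<Longrightarrow> (\<integral>\<^sup>+ s\<in>{0<..<t}. ennreal (h2 s) \<partial>lborel) \<le> ennreal D"
    and "filtered_space M F"
    and "brownian_motion M F T W"
    and "X0 \<in> borel_measurable (F 0)"
    and "distr M borel X0 = q0"
  shows "\<exists>X. mv_solution M F T W X0 L X \<and>
           (\<forall>Y. mv_solution M F T W X0 L Y \<longrightarrow> (AE \<omega> in M. \<forall>t\<in>{0..T}. X t \<omega> = Y t \<omega>))"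
proof -
  interpret mv T D L h1 h2 M F W X0
    by (rule mv.intro[OF assms(1-12)])
  show ?thesis
    by (intro exI[of _ Xlim] conjI allI impI existence uniqueness)
qed

end
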